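(* The canonical bases $W_+M_N$ and $\hat W_-$ of solutions of (L) on $\Sigma_1$ are related by a constant matrix $Q=Q(B,A)$, $W_+(z)M_N=\hat W_-(z)Q$, and $Q^2=\mathrm{Id}$.
   Context: Let $\omega>0$, $l=B/\omega\ge0$, $\mu=A/(2\omega)>0$. System (L): $u'=z^{-2}\big(-(lz+\mu(1+z^2))u+\frac{z}{2i\omega}v\big)$, $v'=\frac{1}{2i\omega z}u$. $F(z)=\operatorname{diag}(z^{-l}e^{\mu(1/z-z)},1)$. $S_\pm$ are sectors with vertex $0$ containing the closed upper/lower half-plane minus $0$, closures avoiding $i\mathbb R_\mp$, $S_-=\overline{S_+}$ (so $z\mapsto1/z$ swaps $S_+$ and $S_-$). $H_\pm$ are the unique invertible matrix functions holomorphic on $S_\pm$, $C^\infty$ on $\overline{S_\pm}\setminus\{\infty\}$, $H_\pm(0)=\mathrm{Id}$, transforming (L) via $w=H_\pm\tilde w$ into $\tilde u'=-z^{-2}(lz+\mu(1+z^2))\tilde u$, $\tilde v'=0$. $W_+=H_+F$ on $S_+$. $\Sigma_1$ is the component of $S_+\cap S_-$ containing $\mathbb R_+$. $M_N=\operatorname{diag}(e^{-2\pi il},1)$. The transformation $\mathbb I:(u,v)(z)\mapsto -iz^{-l}e^{\mu(1/z-z)}\big(-v(z^{-1}),u(z^{-1})\big)$ maps solutions of (L) to solutions of (L) and is an involution of the solution space; $\hat W_-=\mathbb I(W_+M_N)$ is obtained by applying $\mathbb I$ to each column. *)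

theory Defs
  imports "HOL-Analysis.Analysis"
begin

definition mat2 :: "complex \<Rightarrow> complex \<Rightarrow> complex \<Rightarrow> complex \<Rightarrow> complex^2^2" where
  "mat2 a b c d = (\<chi> i j. if i = 1 then (if j = 1 then a else b) else (if j = 1 then c else d))"

definition is_sector :: "complex set \<Rightarrow> bool" where
  "is_sector S \<longleftrightarrow> (\<exists>a b. a < b \<and>
     S = {complex_of_real r * cis t | r t. 0 < r \<and> a < t \<and> t < b})"

text \<open>Admissible sector S_+ (then S_- is its complex conjugate).\<close>
definition admissible_Splus :: "complex set \<Rightarrow> bool" where
  "admissible_Splus S \<longleftrightarrow> is_sector S \<and>
     {z. Im z \<ge> 0} - {0} \<subseteq> S \<and>
     closure S \<inter> {\<i> * complex_of_real t | t. t < 0} = {}"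

text \<open>Branches of z^a on S_+ (arg in (-pi/2, 3pi/2)) and on S_- (arg in (-3pi/2, pi/2)).\<close>
definition zpow_plus :: "complex \<Rightarrow> complex \<Rightarrow> complex" where
  "zpow_plus z a = exp (a * (Ln (- \<i> * z) + \<i> * of_real pi / 2))"

definition zpow_minus :: "complex \<Rightarrow> complex \<Rightarrow> complex" where
  "zpow_minus z a = exp (a * (Ln (\<i> * z) - \<i> * of_real pi / 2))"

text \<open>Coefficient matrix of system (L), written w' = A(z) w with w = (u,v).\<close>
definition coefL :: "real \<Rightarrow> real \<Rightarrow> real \<Rightarrow> complex \<Rightarrow> complex^2^2" where
  "coefL \<omega> l \<mu> z = mat2
     (- (of_real l * z + of_real \<mu> * (1 + z^2)) / z^2) (1 / (2 * \<i> * of_real \<omega> * z))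
     (1 / (2 * \<i> * of_real \<omega> * z)) 0"

text \<open>Coefficient matrix of the diagonal (formal normal form) system.\<close>
definition coefD :: "real \<Rightarrow> real \<Rightarrow> complex \<Rightarrow> complex^2^2" where
  "coefD l \<mu> z = mat2 (- (of_real l * z + of_real \<mu> * (1 + z^2)) / z^2) 0 0 0"

text \<open>H is a normalizing transformation on the sector S: invertible, holomorphic on S,
  C-infinity on closure S (all complex derivatives extend continuously to closure S,
  including the vertex 0), H(0) = Id, and w = H w~ transforms (L) into the diagonal system,
  i.e. H' = A H - H D.\<close>
definition normalizing_on :: "real \<Rightarrow> real \<Rightarrow> real \<Rightarrow> complex set \<Rightarrow> (complex \<Rightarrow> complex^2^2) \<Rightarrow> bool" where
  "normalizing_on \<omega> l \<mu> S H \<longleftrightarrow>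
     (\<forall>z\<in>S. invertible (H z)) \<and>
     (\<forall>i j. (\<lambda>z. H z $ i $ j) holomorphic_on S) \<and>
     (\<forall>i j k. \<forall>z0\<in>closure S. \<exists>L. (((deriv ^^ k) (\<lambda>z. H z $ i $ j)) \<longlongrightarrow> L) (at z0 within S)) \<and>
     (H \<longlongrightarrow> mat 1) (at 0 within S) \<and>
     (\<forall>z\<in>S. \<forall>i j. ((\<lambda>z. H z $ i $ j) has_field_derivative
         (coefL \<omega> l \<mu> z ** H z - H z ** coefD l \<mu> z) $ i $ j) (at z))"

definition Fplus :: "real \<Rightarrow> real \<Rightarrow> complex \<Rightarrow> complex^2^2" where
  "Fplus l \<mu> z = mat2 (zpow_plus z (- of_real l) * exp (of_real \<mu> * (1 / z - z))) 0 0 1"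

definition MN :: "real \<Rightarrow> complex^2^2" where
  "MN l = mat2 (exp (- 2 * of_real pi * \<i> * of_real l)) 0 0 1"

text \<open>The involution I applied columnwise to a matrix solution W (on S_-, branch of S_-):
  (I W)(z) = -i z^{-l} e^{mu(1/z - z)} P W(1/z), with P (u,v) = (-v,u).\<close>
definition invI :: "real \<Rightarrow> real \<Rightarrow> (complex \<Rightarrow> complex^2^2) \<Rightarrow> complex \<Rightarrow> complex^2^2" where
  "invI l \<mu> W z = (\<chi> i j. - \<i> * zpow_minus z (- of_real l) * exp (of_real \<mu> * (1 / z - z))
       * (mat2 0 (-1) 1 0 ** W (1 / z)) $ i $ j)"

end

theory Submission
  imports Defs
begin


lemma mat2_nth [simp]:
  "mat2 a b c d $ 1 $ 1 = a" "mat2 a b c d $ 1 $ 2 = b"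
  "mat2 a b c d $ 2 $ 1 = c" "mat2 a b c d $ 2 $ 2 = d"
  by (simp_all add: mat2_def)

lemma mult2_nth: "((X::complex^2^2) ** Y) $ i $ j = X$i$1 * Y$1$j + X$i$2 * Y$2$j"
  by (simp add: matrix_matrix_mult_def sum_2)

lemma mat2_eqI: "(M::complex^2^2) = N \<longleftrightarrow> M$1$1 = N$1$1 \<and> M$1$2 = N$1$2 \<and> M$2$1 = N$2$1 \<and> M$2$2 = N$2$2"
  by (auto simp: vec_eq_iff forall_2)

lemma sector_nz: "is_sector S \<Longrightarrow> z \<in> S \<Longrightarrow> z \<noteq> 0"
  unfolding is_sector_def by auto

lemma sector_scale: "is_sector S \<Longrightarrow> z \<in> S \<Longrightarrow> c > 0 \<Longrightarrow> complex_of_real c * z \<in> S"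
  unfolding is_sector_def
proof (elim exE conjE)
  fix a b assume S: "S = {complex_of_real r * cis t |r t. 0 < r \<and> a < t \<and> t < b}" and "z \<in> S" "c > 0"
  then obtain r t where "z = complex_of_real r * cis t" "0 < r" "a < t" "t < b" by auto
  then have "complex_of_real c * z = complex_of_real (c*r) * cis t \<and> 0 < c*r \<and> a < t \<and> t < b"
    using \<open>c>0\<close> by simp
  then show "complex_of_real c * z \<in> S" unfolding S by blast
qed

lemma sector_open: assumes "is_sector S" shows "open S"
proof -
  obtain a b where S: "S = {complex_of_real r * cis t |r t. 0 < r \<and> a < t \<and> t < b}"
    using assms unfolding is_sector_def by auto
  show ?thesis
  proof (rule Topological_Spaces.openI)
    fix z0 assume "z0 \<in> S"
    then obtain r0 t0 where z0: "z0 = complex_of_real r0 * cis t0" "0 < r0" "a < t0" "t0 < b"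
      unfolding S by auto
    have nz: "z0 \<noteq> 0" using z0 by auto
    define e where "e = min (t0 - a) (b - t0)"
    have e: "e > 0" using z0 by (simp add: e_def)
    define U where "U = {w. 0 < Re w} \<inter> Arg -` {-e<..<e}"
    have "open U" unfolding U_def
      by (rule continuous_open_preimage)
        (auto intro: continuous_on_subset[OF continuous_on_Arg] simp: open_halfspace_Re_gt complex_nonpos_Reals_iff)
    define T where "T = UNIV \<inter> (\<lambda>z. z / z0) -` U"
    have "open T" unfolding T_def
      using nz by (intro continuous_open_preimage) (auto intro!: continuous_intros \<open>open U\<close>)
    moreover have "z0 \<in> T" using nz e by (simp add: T_def U_def)
    moreover have "T \<subseteq> S"
    proof
      fix z assume "z \<in> T"
      then have w: "0 < Re (z/z0)" "\<bar>Arg (z/z0)\<bar> < e" unfolding T_def U_def by auto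
      define w where "w = z / z0"
      have wnz: "w \<noteq> 0" using w w_def by auto
      have "z = z0 * w" using nz w_def by simp
      also have "w = complex_of_real (cmod w) * cis (Arg w)" 
        by (metis rcis_cmod_Arg rcis_def)
      finally have "z = complex_of_real (r0 * cmod w) * cis (t0 + Arg w)"
        using z0 by (simp add: cis_mult[symmetric] algebra_simps)
      moreover have "0 < r0 * cmod w \<and> a < t0 + Arg w \<and> t0 + Arg w < b"
        using w wnz z0 e_def w_def by auto
      ultimately show "z \<in> S" unfolding S by blast
    qed
    ultimately show "\<exists>T. open T \<and> z0 \<in> T \<and> T \<subseteq> S" by blast
  qed
qed



lemma cnj_image_iff: "z \<in> cnj ` S \<longleftrightarrow> cnj z \<in> S"
  by (metis complex_cnj_cnj image_iff)

locale secs =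
  fixes Sp Sm :: "complex set"
  assumes adm: "admissible_Splus Sp" and Sm: "Sm = cnj ` Sp"
begin

lemma sec: "is_sector Sp" using adm admissible_Splus_def by blast

lemma Sm_iff: "z \<in> Sm \<longleftrightarrow> cnj z \<in> Sp" using Sm cnj_image_iff by blast

lemma open_Sp: "open Sp" by (rule sector_open[OF sec])

lemma open_Sm: "open Sm"
proof -
  have "Sm = cnj -` Sp" using Sm_iff by auto
  then show ?thesis using open_Sp by (simp add: continuous_open_vimage continuous_on_cnj)
qed

lemma open_I: "open (Sp \<inter> Sm)" using open_Sp open_Sm by auto

lemma one_in: "1 \<in> Sp \<inter> Sm"
  using adm Sm_iff[of 1] unfolding admissible_Splus_def by auto

lemma nz: "z \<in> Sp \<Longrightarrow> z \<noteq> 0" using sector_nz[OF sec] by blast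

lemma not_negim: "z \<in> Sp \<Longrightarrow> Re z = 0 \<Longrightarrow> Im z \<ge> 0"
proof (rule ccontr)
  assume "z \<in> Sp" "Re z = 0" "\<not> Im z \<ge> 0"
  have "z = \<i> * complex_of_real (Im z)" using \<open>Re z = 0\<close> by (simp add: complex_eq_iff)
  then have "z \<in> {\<i> * complex_of_real t | t. t < 0}" using \<open>\<not> Im z \<ge> 0\<close> by force
  then have "z \<in> closure Sp \<inter> {\<i> * complex_of_real t | t. t < 0}"
    using closure_subset \<open>z \<in> Sp\<close> by blast
  then show False using adm unfolding admissible_Splus_def by blast
qed

lemma Re_nz: "z \<in> Sp \<inter> Sm \<Longrightarrow> Re z \<noteq> 0"
proof
  assume z: "z \<in> Sp \<inter> Sm" "Re z = 0"
  have "Im z \<ge> 0" using not_negim z by auto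
  moreover have "Im (cnj z) \<ge> 0" using not_negim[of "cnj z"] z Sm_iff by auto
  ultimately have "z = 0" using z by (simp add: complex_eq_iff)
  then show False using nz z by auto
qed

lemma inv_in: assumes "z \<in> Sp \<inter> Sm" shows "1/z \<in> Sp \<inter> Sm"
proof -
  have z0: "z \<noteq> 0" using assms nz by auto
  have c: "(1 / (cmod z)^2) > 0" using z0 by simp
  have e1: "1/z = complex_of_real (1 / (cmod z)^2) * cnj z"
    using complex_div_cnj[of 1 z] by (simp add: divide_inverse)
  have "1/z \<in> Sp" unfolding e1 using sector_scale[OF sec _ c] assms Sm_iff by auto
  moreover have "cnj (1/z) = complex_of_real (1 / (cmod z)^2) * z" using e1 by simp
  then have "cnj (1/z) \<in> Sp" using sector_scale[OF sec _ c] assms by auto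
  ultimately show ?thesis using Sm_iff by auto
qed

definition "Sig = connected_component_set (Sp \<inter> Sm) 1"

lemma Sig_open: "open Sig" unfolding Sig_def using open_I open_connected_component by blast
lemma Sig_conn: "connected Sig" unfolding Sig_def by simp
lemma Sig_one: "1 \<in> Sig" unfolding Sig_def using one_in by simp
lemma Sig_sub: "Sig \<subseteq> Sp \<inter> Sm" unfolding Sig_def by (rule connected_component_subset)

lemma Sig_Re: assumes "z \<in> Sig" shows "Re z > 0"
proof (rule ccontr)
  assume "\<not> Re z > 0"
  have "connected (Re ` Sig)" using Sig_conn by (intro connected_continuous_image) (auto intro: continuous_intros)
  moreover have "Re z \<in> Re ` Sig" "1 \<in> Re ` Sig" using assms Sig_one by force+
  ultimately have "0 \<in> Re ` Sig" using \<open>\<not> Re z > 0\<close> unfolding connected_iff_interval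
    by (metis linorder_not_le zero_le_one)
  then obtain x where "x \<in> Sig" "Re x = 0" by auto
  then show False using Re_nz Sig_sub by blast
qed

lemma Sig_inv: assumes "z \<in> Sig" shows "1/z \<in> Sig"
proof -
  have f1: "1 \<in> (\<lambda>z. 1/z) ` Sig" using Sig_one by (intro rev_image_eqI[of 1]) auto
  have "\<forall>z\<in>Sig. z \<noteq> 0" using Sig_sub nz by blast
  then have "continuous_on Sig (\<lambda>z. 1/z)"
    by (intro continuous_on_divide continuous_on_const continuous_on_id) auto
  then have f2: "connected ((\<lambda>z. 1/z) ` Sig)" using Sig_conn
    by (intro connected_continuous_image)
  have f3: "(\<lambda>z. 1/z) ` Sig \<subseteq> Sp \<inter> Sm" using Sig_sub inv_in by blast
  have "(\<lambda>z. 1/z) ` Sig \<subseteq> Sig" using connected_component_maximal[OF f1 f2 f3] by (simp only: Sig_def)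
  then show ?thesis using assms by (meson image_subset_iff)
qed

end


lemma not_npR: "Re z > 0 \<Longrightarrow> - \<i> * z \<notin> \<real>\<^sub>\<le>\<^sub>0" "Re z > 0 \<Longrightarrow> \<i> * z \<notin> \<real>\<^sub>\<le>\<^sub>0"
  by (auto simp: complex_nonpos_Reals_iff)

lemma zplus_deriv: assumes "Re z > 0"
  shows "((\<lambda>z. zpow_plus z a) has_field_derivative (a / z * zpow_plus z a)) (at z)"
proof -
  have z: "z \<noteq> 0" using assms by auto
  show ?thesis unfolding zpow_plus_def
    by (rule derivative_eq_intros refl not_npR[OF assms] | simp)+ (use z in \<open>simp add: field_simps\<close>)
qed

lemma zminus_deriv: assumes "Re z > 0"
  shows "((\<lambda>z. zpow_minus z a) has_field_derivative (a / z * zpow_minus z a)) (at z)"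
proof -
  have z: "z \<noteq> 0" using assms by auto
  show ?thesis unfolding zpow_minus_def
    by (rule derivative_eq_intros refl not_npR[OF assms] | simp)+ (use z in \<open>simp add: field_simps\<close>)
qed

lemma zminus_Ln: assumes "Re z > 0" shows "zpow_minus z a = exp (a * Ln z)"
proof -
  have z: "z \<noteq> 0" using assms by auto
  have "\<bar>Im (Ln z)\<bar> < pi/2" using Re_Ln_pos_lt_imp assms by blast
  then have "Ln (\<i> * z) = Ln \<i> + Ln z" using z by (intro Ln_times_simple) auto
  then show ?thesis unfolding zpow_minus_def by simp
qed

lemma zminus_inv: assumes "Re z > 0" shows "zpow_minus z a * zpow_minus (1/z) a = 1"
proof -
  have z: "z \<noteq> 0" using assms by auto
  have "Re (1/z) > 0" using assms by (simp add: Re_divide divide_simps not_less add_nonneg_nonneg) (smt (verit) zero_less_power2 zero_le_power2)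
  then have "zpow_minus (1/z) a = exp (a * Ln (inverse z))" using zminus_Ln by (simp add: divide_inverse)
  also have "Ln (inverse z) = - Ln z" using assms by (intro Ln_inverse) (auto simp: complex_nonpos_Reals_iff)
  finally show ?thesis using zminus_Ln[OF assms] by (simp add: exp_minus[symmetric] exp_add[symmetric])
qed

definition alpha :: "real \<Rightarrow> real \<Rightarrow> complex \<Rightarrow> complex" where
  "alpha l \<mu> z = - (of_real l * z + of_real \<mu> * (1 + z^2)) / z^2"

definition fp :: "real \<Rightarrow> real \<Rightarrow> complex \<Rightarrow> complex" where
  "fp l \<mu> z = zpow_plus z (- of_real l) * exp (of_real \<mu> * (1 / z - z))"

definition gm :: "real \<Rightarrow> real \<Rightarrow> complex \<Rightarrow> complex" where
  "gm l \<mu> z = - \<i> * zpow_minus z (- of_real l) * exp (of_real \<mu> * (1 / z - z))"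

lemma fp_deriv: assumes "Re z > 0"
  shows "(fp l \<mu> has_field_derivative (alpha l \<mu> z * fp l \<mu> z)) (at z)"
proof -
  have z: "z \<noteq> 0" using assms by auto
  show ?thesis unfolding fp_def alpha_def
    by (rule derivative_eq_intros refl zplus_deriv[OF assms] | simp add: z)+ 
       (use z in \<open>simp add: field_simps power2_eq_square\<close>)
qed

lemma gm_deriv: assumes "Re z > 0"
  shows "(gm l \<mu> has_field_derivative (alpha l \<mu> z * gm l \<mu> z)) (at z)"
proof -
  have z: "z \<noteq> 0" using assms by auto
  show ?thesis unfolding gm_def alpha_def
    by (rule derivative_eq_intros refl zminus_deriv[OF assms] | simp add: z)+ 
       (use z in \<open>simp add: field_simps power2_eq_square\<close>)
qed

lemma gm_inv: assumes "Re z > 0" shows "gm l \<mu> z * gm l \<mu> (1/z) = -1"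
proof -
  have z: "z \<noteq> 0" using assms by auto
  have "gm l \<mu> z * gm l \<mu> (1/z) = - ((zpow_minus z (- of_real l) * zpow_minus (1/z) (- of_real l))
        * exp (of_real \<mu> * (1 / z - z) + of_real \<mu> * (z - 1/z)))"
    unfolding gm_def exp_add by (simp add: z mult_ac complex_i_mult_minus)
  also have "\<dots> = -1" using zminus_inv[OF assms] by (simp add: algebra_simps)
  finally show ?thesis .
qed



lemma phi_deriv:
  fixes v11 v12 v21 v22 w1 w2 :: "complex \<Rightarrow> complex"
  assumes d11: "(v11 has_field_derivative (a11 * v11 z + a12 * v21 z)) (at z)"
      and d21: "(v21 has_field_derivative (a21 * v11 z + a22 * v21 z)) (at z)"
      and d12: "(v12 has_field_derivative (a11 * v12 z + a12 * v22 z)) (at z)"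
      and d22: "(v22 has_field_derivative (a21 * v12 z + a22 * v22 z)) (at z)"
      and e1: "(w1 has_field_derivative (a11 * w1 z + a12 * w2 z)) (at z)"
      and e2: "(w2 has_field_derivative (a21 * w1 z + a22 * w2 z)) (at z)"
      and d: "v11 z * v22 z - v12 z * v21 z \<noteq> 0"
  shows "((\<lambda>z. (v22 z * w1 z - v12 z * w2 z) / (v11 z * v22 z - v12 z * v21 z)) has_field_derivative 0) (at z)"
    and "((\<lambda>z. (v11 z * w2 z - v21 z * w1 z) / (v11 z * v22 z - v12 z * v21 z)) has_field_derivative 0) (at z)"
proof -
  show "((\<lambda>z. (v22 z * w1 z - v12 z * w2 z) / (v11 z * v22 z - v12 z * v21 z)) has_field_derivative 0) (at z)"
    by (rule derivative_eq_intros d11 d12 d21 d22 e1 e2 refl d | simp)+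
       (use d in \<open>simp add: divide_simps, algebra\<close>)
  show "((\<lambda>z. (v11 z * w2 z - v21 z * w1 z) / (v11 z * v22 z - v12 z * v21 z)) has_field_derivative 0) (at z)"
    by (rule derivative_eq_intros d11 d12 d21 d22 e1 e2 refl d | simp)+
       (use d in \<open>simp add: divide_simps, algebra\<close>)
qed



locale mainloc = secs Sp Sm for Sp Sm +
  fixes \<omega> l \<mu> :: real and H :: "complex \<Rightarrow> complex^2^2"
  assumes normH: "normalizing_on \<omega> l \<mu> Sp H"
begin

definition "W z = H z ** Fplus l \<mu> z ** MN l"
definition "V = invI l \<mu> W"
definition "mm = exp (- 2 * of_real pi * \<i> * of_real l)"
definition "bb z = 1 / (2 * \<i> * of_real \<omega> * z)"

lemma A_nth: "coefL \<omega> l \<mu> z $1$1 = alpha l \<mu> z" "coefL \<omega> l \<mu> z $1$2 = bb z"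
   "coefL \<omega> l \<mu> z $2$1 = bb z" "coefL \<omega> l \<mu> z $2$2 = 0"
  by (simp_all add: coefL_def alpha_def bb_def)

lemma coefD_alpha: "coefD l \<mu> z = mat2 (alpha l \<mu> z) 0 0 0"
  by (simp add: coefD_def alpha_def)

lemma W_nth: "W z $ i $ 1 = H z $ i $ 1 * fp l \<mu> z * mm" "W z $ i $ 2 = H z $ i $ 2"
  by (simp_all add: W_def mult2_nth Fplus_def MN_def fp_def mm_def)

lemma V_nth: "V z $ 1 $ j = - gm l \<mu> z * W (1/z) $ 2 $ j" "V z $ 2 $ j = gm l \<mu> z * W (1/z) $ 1 $ j"
  by (simp_all add: V_def invI_def mult2_nth gm_def)

lemma H_deriv: assumes "z \<in> Sp"
  shows "((\<lambda>z. H z $ i $ j) has_field_derivative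
     (coefL \<omega> l \<mu> z ** H z - H z ** coefD l \<mu> z) $ i $ j) (at z)"
  using normH assms unfolding normalizing_on_def by blast

lemma W_deriv: assumes "z \<in> Sp" "Re z > 0"
  shows "((\<lambda>z. W z $ i $ j) has_field_derivative (coefL \<omega> l \<mu> z ** W z) $ i $ j) (at z)"
proof -
  have z: "z \<noteq> 0" using assms by auto
  consider "j = 1" | "j = 2" using exhaust_2 by blast
  then show ?thesis
  proof cases
    case 1
    have e: "(\<lambda>z. W z $ i $ j) = (\<lambda>z. H z $ i $ 1 * fp l \<mu> z * mm)" using 1 by (simp add: W_nth)
    show ?thesis unfolding e
      by (rule derivative_eq_intros H_deriv[OF assms(1)] fp_deriv[OF assms(2)] refl)+
         (simp add: 1 mult2_nth W_nth coefD_alpha algebra_simps)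
  next
    case 2
    have e: "(\<lambda>z. W z $ i $ j) = (\<lambda>z. H z $ i $ 2)" using 2 by (simp add: W_nth)
    show ?thesis unfolding e using H_deriv[OF assms(1), of i 2]
      by (simp add: 2 mult2_nth W_nth coefD_alpha)
  qed
qed

lemma inv_deriv: "z \<noteq> 0 \<Longrightarrow> ((\<lambda>z::complex. 1/z) has_field_derivative (- 1 / z^2)) (at z)"
  by (rule derivative_eq_intros refl | simp)+ (simp add: power2_eq_square)

lemma Winv_deriv: assumes "1/z \<in> Sp" "Re z > 0"
  shows "((\<lambda>z. W (1/z) $ k $ j) has_field_derivative
           ((coefL \<omega> l \<mu> (1/z) ** W (1/z)) $ k $ j * (- 1 / z^2))) (at z)"
proof -
  have z: "z \<noteq> 0" using assms by auto
  have r: "Re (1/z) > 0" using assms(2)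
    by (simp add: Re_divide divide_simps not_less add_nonneg_nonneg) (smt (verit) zero_less_power2 zero_le_power2)
  show ?thesis
    by (rule DERIV_chain2[OF W_deriv[OF assms(1) r] inv_deriv[OF z]])
qed

lemma V_deriv: assumes "1/z \<in> Sp" "Re z > 0"
  shows "((\<lambda>z. V z $ i $ j) has_field_derivative (coefL \<omega> l \<mu> z ** V z) $ i $ j) (at z)"
proof -
  have z: "z \<noteq> 0" using assms by auto
  consider "i = 1" | "i = 2" using exhaust_2 by blast
  then show ?thesis
  proof cases
    case 1
    have e: "(\<lambda>z. V z $ i $ j) = (\<lambda>z. - gm l \<mu> z * W (1/z) $ 2 $ j)" using 1 by (simp add: V_nth)
    show ?thesis unfolding e
      by (rule derivative_eq_intros Winv_deriv[OF assms] gm_deriv[OF assms(2)] refl)+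
         (use z in \<open>simp add: 1 mult2_nth V_nth A_nth alpha_def bb_def field_simps power2_eq_square\<close>)
  next
    case 2
    have e: "(\<lambda>z. V z $ i $ j) = (\<lambda>z. gm l \<mu> z * W (1/z) $ 1 $ j)" using 2 by (simp add: V_nth)
    show ?thesis unfolding e
      by (rule derivative_eq_intros Winv_deriv[OF assms] gm_deriv[OF assms(2)] refl)+
         (use z in \<open>simp add: 2 mult2_nth V_nth A_nth alpha_def bb_def field_simps power2_eq_square\<close>)
  qed
qed

lemma inv2: fixes pa pb pc pe px py :: complex
  assumes "d = pa * pe - pb * pc" "d \<noteq> 0"
  shows "px = pa * ((pe * px - pb * py)/d) + pb * ((pa * py - pc * px)/d)"
    "py = pc * ((pe * px - pb * py)/d) + pe * ((pa * py - pc * px)/d)"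
  using assms by (simp_all add: divide_simps) (simp_all add: algebra_simps)

lemma detW: assumes "w \<in> Sp" shows "W w $1$1 * W w $2$2 - W w $1$2 * W w $2$1 \<noteq> 0"
proof -
  have "invertible (H w)" using normH assms unfolding normalizing_on_def by blast
  then have h: "det (H w) \<noteq> 0" by (simp add: invertible_det_nz)
  have f: "det (Fplus l \<mu> w) \<noteq> 0" by (simp add: det_2 Fplus_def zpow_plus_def)
  have m: "det (MN l) \<noteq> 0" by (simp add: det_2 MN_def)
  have "det (W w) \<noteq> 0" unfolding W_def det_mul using h f m by simp
  then show ?thesis by (simp add: det_2)
qed

lemma detV: assumes "1/z \<in> Sp" "Re z > 0"
  shows "V z $1$1 * V z $2$2 - V z $1$2 * V z $2$1 \<noteq> 0"
proof -
  have g: "gm l \<mu> z \<noteq> 0" using gm_inv[OF assms(2), of l \<mu>] by auto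
  have "V z $1$1 * V z $2$2 - V z $1$2 * V z $2$1 = (gm l \<mu> z)^2 *
      (W (1/z) $1$1 * W (1/z) $2$2 - W (1/z) $1$2 * W (1/z) $2$1)"
    by (simp add: V_nth algebra_simps power2_eq_square)
  then show ?thesis using g detW[OF assms(1)] by simp
qed

lemma main_res: "\<exists>Q. (\<forall>z\<in>Sig. W z = V z ** Q) \<and> Q ** Q = mat 1"
proof -
  define d where "d z = V z$1$1*V z$2$2 - V z$1$2*V z$2$1" for z
  define p1 where "p1 j z = (V z$2$2 * W z$1$j - V z$1$2 * W z$2$j)/d z" for j z
  define p2 where "p2 j z = (V z$1$1 * W z$2$j - V z$2$1 * W z$1$j)/d z" for j z
  have pts: "z \<in> Sp" "1/z \<in> Sp" "Re z > 0" if "z \<in> Sig" for z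
    using that Sig_sub Sig_inv Sig_Re by auto
  have dnz: "d z \<noteq> 0" if "z \<in> Sig" for z using detV pts[OF that] unfolding d_def by blast
  have der: "(p1 j has_field_derivative 0) (at z) \<and> (p2 j has_field_derivative 0) (at z)"
    if "z \<in> Sig" for z j
  proof -
    note pz = pts[OF that]
    note Vd = V_deriv[OF pz(2) pz(3), unfolded mult2_nth]
    note Wd = W_deriv[OF pz(1) pz(3), unfolded mult2_nth]
    have "p1 j = (\<lambda>z. (V z$2$2 * W z$1$j - V z$1$2 * W z$2$j) / (V z$1$1*V z$2$2 - V z$1$2*V z$2$1))"
      "p2 j = (\<lambda>z. (V z$1$1 * W z$2$j - V z$2$1 * W z$1$j) / (V z$1$1*V z$2$2 - V z$1$2*V z$2$1))"
      by (auto simp: p1_def p2_def d_def)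
    then show ?thesis
      using phi_deriv[OF Vd[of 1 1] Vd[of 2 1] Vd[of 1 2] Vd[of 2 2] Wd[of 1 j] Wd[of 2 j]]
        dnz[OF that] unfolding d_def by simp
  qed
  have const: "p1 j z = p1 j 1 \<and> p2 j z = p2 j 1" if "z \<in> Sig" for z j
  proof -
    have "p1 j constant_on Sig" "p2 j constant_on Sig"
      using der by (auto intro!: has_field_derivative_0_imp_constant_on Sig_conn Sig_open)
    then show ?thesis using that Sig_one unfolding constant_on_def by metis
  qed
  define Q where "Q = mat2 (p1 1 1) (p1 2 1) (p2 1 1) (p2 2 1)"
  have WVQ: "W z = V z ** Q" if "z \<in> Sig" for z
  proof -
    have "W z $ i $ j = V z $i$1 * p1 j z + V z $i$2 * p2 j z" for i j
    proof -
      consider "i = 1" | "i = 2" using exhaust_2 by blast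
      then show ?thesis
        using inv2[where px="W z $ 1 $ j" and py="W z $ 2 $ j", OF refl dnz[OF that, unfolded d_def]]
        unfolding p1_def p2_def d_def by cases simp_all
    qed
    then show ?thesis using const[OF that] unfolding mat2_eqI by (simp add: mult2_nth Q_def)
  qed
  have g: "gm l \<mu> 1 * gm l \<mu> 1 = -1" using gm_inv[of 1 l \<mu>] by simp
  have V1: "V 1 $ 1 $ j = - gm l \<mu> 1 * W 1 $ 2 $ j" "V 1 $ 2 $ j = gm l \<mu> 1 * W 1 $ 1 $ j" for j
    using V_nth[of 1 j] by simp_all
  have W1: "W 1 $ i $ j = V 1 $ i $ 1 * Q $ 1 $ j + V 1 $ i $ 2 * Q $ 2 $ j" for i j
    using WVQ[OF Sig_one] by (simp add: mult2_nth)
  have VWQ: "V 1 = W 1 ** Q"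
  proof -
    have "V 1 $ i $ j = W 1 $ i $ 1 * Q $ 1 $ j + W 1 $ i $ 2 * Q $ 2 $ j" for i j
    proof -
      consider "i = 1" | "i = 2" using exhaust_2 by blast
      then show ?thesis
      proof cases
        case 1
        have "V 1 $ 1 $ j = - gm l \<mu> 1 * (V 1 $ 2 $ 1 * Q $ 1 $ j + V 1 $ 2 $ 2 * Q $ 2 $ j)"
          by (simp only: V1(1) W1[of 2 j])
        also have "\<dots> = - (gm l \<mu> 1 * gm l \<mu> 1) * (W 1 $ 1 $ 1 * Q $ 1 $ j + W 1 $ 1 $ 2 * Q $ 2 $ j)"
          by (simp only: V1(2)) (simp add: algebra_simps)
        finally show ?thesis using 1 g by simp
      next
        case 2
        have "V 1 $ 2 $ j = gm l \<mu> 1 * (V 1 $ 1 $ 1 * Q $ 1 $ j + V 1 $ 1 $ 2 * Q $ 2 $ j)"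
          by (simp only: V1(2) W1[of 1 j])
        also have "\<dots> = - (gm l \<mu> 1 * gm l \<mu> 1) * (W 1 $ 2 $ 1 * Q $ 1 $ j + W 1 $ 2 $ 2 * Q $ 2 $ j)"
          by (simp only: V1(1)) (simp add: algebra_simps)
        finally show ?thesis using 2 g by simp
      qed
    qed
    then show ?thesis unfolding mat2_eqI by (simp add: mult2_nth)
  qed
  have "invertible (V 1)" using dnz[OF Sig_one] by (simp add: invertible_det_nz det_2 d_def)
  then obtain B where B: "B ** V 1 = mat 1" using invertible_left_inverse by blast
  have "V 1 = V 1 ** (Q ** Q)" using VWQ WVQ[OF Sig_one] by (metis matrix_mul_assoc)
  then have "B ** V 1 = (B ** V 1) ** (Q ** Q)" by (metis matrix_mul_assoc)
  then have "Q ** Q = mat 1" using B by simp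
  then show ?thesis using WVQ by blast
qed

end

theorem mainTheorem6:
  fixes \<omega> B A :: real and Splus Sminus :: "complex set" and Hplus :: "complex \<Rightarrow> complex^2^2"
  assumes "\<omega> > 0" and "B \<ge> 0" and "A > 0"
    and "admissible_Splus Splus"
    and "Sminus = cnj ` Splus"
    and "normalizing_on \<omega> (B / \<omega>) (A / (2 * \<omega>)) Splus Hplus"
  shows "\<exists>Q :: complex^2^2.
     (\<forall>z \<in> connected_component_set (Splus \<inter> Sminus) 1.
        Hplus z ** Fplus (B / \<omega>) (A / (2 * \<omega>)) z ** MN (B / \<omega>)
        = invI (B / \<omega>) (A / (2 * \<omega>))
            (\<lambda>w. Hplus w ** Fplus (B / \<omega>) (A / (2 * \<omega>)) w ** MN (B / \<omega>)) z ** Q)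
     \<and> Q ** Q = mat 1"
proof -
  interpret mainloc Splus Sminus \<omega> "B / \<omega>" "A / (2 * \<omega>)" Hplus
    using assms by unfold_locales auto
  obtain Q where Q: "\<forall>z\<in>Sig. W z = V z ** Q" "Q ** Q = mat 1" using main_res by blast
  have We: "W = (\<lambda>w. Hplus w ** Fplus (B / \<omega>) (A / (2 * \<omega>)) w ** MN (B / \<omega>))"
    by (rule ext) (simp add: W_def)
  show ?thesis
    using Q unfolding Sig_def V_def We[symmetric] by (intro exI[of _ Q]) (simp add: W_def)
qed

end
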